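(* Let $G$ be a finite simple graph whose edge ideal $I=I(G)$ satisfies $v(I)=1$. Then $v(I^{n+1})=2n+1$ for all $n\ge 1$.
   Context: $K$ is a field and $S=K[x_1,\dots,x_t]$ is standard graded, with the vertices of $G$ being $x_1,\dots,x_t$. The edge ideal is $I(G)=\langle x_ix_j : \{x_i,x_j\}\text{ an edge of } G\rangle$. For a proper graded ideal $J$, the $v$-number is $v(J)=\min\{k\ge 0 : \exists f\in S_k,\ \mathcal P\in\operatorname{Ass}(S/J) \text{ with } (J:f)=\mathcal P\}$. *)

theory Defs
  imports Main "HOL-Library.Poly_Mapping"
begin

text \<open>Polynomial ring S = K[x_v : v vertex] for a finite vertex type 'v:
  polynomials are finitely supported maps from monomials (exponent vectors
  of type v to nat) to coefficients in K.\<close>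

type_synonym ('v, 'k) mpoly = "('v \<Rightarrow>\<^sub>0 nat) \<Rightarrow>\<^sub>0 'k"

definition is_ideal :: "'a::comm_ring_1 set \<Rightarrow> bool" where
  "is_ideal I \<longleftrightarrow> 0 \<in> I \<and> (\<forall>a\<in>I. \<forall>b\<in>I. a + b \<in> I) \<and> (\<forall>r. \<forall>a\<in>I. r * a \<in> I)"

definition ideal_gen :: "'a::comm_ring_1 set \<Rightarrow> 'a set" where
  "ideal_gen A = \<Inter> {I. is_ideal I \<and> A \<subseteq> I}"

definition ideal_prod :: "'a::comm_ring_1 set \<Rightarrow> 'a set \<Rightarrow> 'a set" where
  "ideal_prod I J = ideal_gen {a * b | a b. a \<in> I \<and> b \<in> J}"

fun ideal_pow :: "'a::comm_ring_1 set \<Rightarrow> nat \<Rightarrow> 'a set" where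
  "ideal_pow I 0 = UNIV"
| "ideal_pow I (Suc n) = ideal_prod I (ideal_pow I n)"

definition colon :: "'a::comm_ring_1 set \<Rightarrow> 'a \<Rightarrow> 'a set" where
  "colon J f = {g. g * f \<in> J}"

definition prime_ideal :: "'a::comm_ring_1 set \<Rightarrow> bool" where
  "prime_ideal P \<longleftrightarrow> is_ideal P \<and> P \<noteq> UNIV \<and> (\<forall>a b. a * b \<in> P \<longrightarrow> a \<in> P \<or> b \<in> P)"

text \<open>Associated primes Ass(S/J): primes of the form (J : f).\<close>
definition Ass :: "'a::comm_ring_1 set \<Rightarrow> 'a set set" where
  "Ass J = {P. prime_ideal P \<and> (\<exists>f. colon J f = P)}"

definition mdeg :: "('v::finite \<Rightarrow>\<^sub>0 nat) \<Rightarrow> nat" where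
  "mdeg m = (\<Sum>v\<in>UNIV. Poly_Mapping.lookup m v)"

text \<open>f \<in> S_k: f is homogeneous of degree k (0 belongs to every S_k).\<close>
definition homogeneous :: "nat \<Rightarrow> ('v::finite, 'k::field) mpoly \<Rightarrow> bool" where
  "homogeneous k f \<longleftrightarrow> (\<forall>m\<in>Poly_Mapping.keys f. mdeg m = k)"

definition v_number :: "('v::finite, 'k::field) mpoly set \<Rightarrow> nat" where
  "v_number J = (LEAST k. \<exists>f P. homogeneous k f \<and> P \<in> Ass J \<and> colon J f = P)"

definition simple_graph :: "('v \<Rightarrow> 'v \<Rightarrow> bool) \<Rightarrow> bool" where
  "simple_graph E \<longleftrightarrow> (\<forall>x y. E x y \<longrightarrow> E y x) \<and> (\<forall>x. \<not> E x x)"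

definition var_prod :: "'v \<Rightarrow> 'v \<Rightarrow> ('v, 'k::field) mpoly" where
  "var_prod i j = Poly_Mapping.single (Poly_Mapping.single i 1 + Poly_Mapping.single j 1) 1"

definition edge_ideal :: "('v \<Rightarrow> 'v \<Rightarrow> bool) \<Rightarrow> ('v::finite, 'k::field) mpoly set" where
  "edge_ideal E = ideal_gen {var_prod i j | i j. E i j}"

end

theory Submission
  imports Defs
begin

lemma poly_decomp:
  fixes f :: "'a \<Rightarrow>\<^sub>0 'b::comm_monoid_add"
  shows "f = (\<Sum>q\<in>Poly_Mapping.keys f. Poly_Mapping.single q (Poly_Mapping.lookup f q))"
proof (rule poly_mapping_eqI)
  fix k
  show "Poly_Mapping.lookup f k = Poly_Mapping.lookup (\<Sum>q\<in>Poly_Mapping.keys f. Poly_Mapping.single q (Poly_Mapping.lookup f q)) k"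
    by (simp add: lookup_sum lookup_single when_def in_keys_iff)
qed

lemma lookup_mult_fin:
  fixes f g :: "'a::comm_monoid_add \<Rightarrow>\<^sub>0 'b::comm_semiring_0"
  shows "Poly_Mapping.lookup (f * g) k =
    (\<Sum>a\<in>Poly_Mapping.keys f. \<Sum>b\<in>Poly_Mapping.keys g.
        if a + b = k then Poly_Mapping.lookup f a * Poly_Mapping.lookup g b else 0)"
proof -
  have "f * g = (\<Sum>a\<in>Poly_Mapping.keys f. Poly_Mapping.single a (Poly_Mapping.lookup f a)) *
                (\<Sum>b\<in>Poly_Mapping.keys g. Poly_Mapping.single b (Poly_Mapping.lookup g b))"
    using poly_decomp[of f] poly_decomp[of g] by simp
  also have "\<dots> = (\<Sum>a\<in>Poly_Mapping.keys f. \<Sum>b\<in>Poly_Mapping.keys g.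
       Poly_Mapping.single (a + b) (Poly_Mapping.lookup f a * Poly_Mapping.lookup g b))"
    by (simp add: sum_product mult_single)
  finally show ?thesis
    by (simp add: lookup_sum lookup_single when_def)
qed

lemma lookup_single_mult_shift:
  fixes f :: "'a::cancel_comm_monoid_add \<Rightarrow>\<^sub>0 'b::comm_semiring_1"
  shows "Poly_Mapping.lookup (Poly_Mapping.single m c * f) (m + k) = c * Poly_Mapping.lookup f k"
proof (cases "c = 0")
  case True then show ?thesis by simp
next
  case False
  have "Poly_Mapping.lookup (Poly_Mapping.single m c * f) (m + k) =
     (\<Sum>b\<in>Poly_Mapping.keys f. if b = k then c * Poly_Mapping.lookup f b else 0)"
    using False by (simp add: lookup_mult_fin)
  also have "\<dots> = c * Poly_Mapping.lookup f k"
    by (simp add: in_keys_iff)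
  finally show ?thesis .
qed

lemma nzd_gen:
  fixes enc :: "'a::comm_monoid_add \<Rightarrow> 'c::{ordered_cancel_comm_monoid_add, linorder}"
    and f g :: "'a \<Rightarrow>\<^sub>0 'b::{comm_semiring_0, semiring_no_zero_divisors}"
  assumes inj: "inj enc" and add: "\<And>a b. enc (a + b) = enc a + enc b"
    and nz: "f \<noteq> 0" "g \<noteq> 0"
  shows "f * g \<noteq> 0"
proof -
  have kf: "finite (Poly_Mapping.keys f)" "Poly_Mapping.keys f \<noteq> {}" using nz by auto
  have kg: "finite (Poly_Mapping.keys g)" "Poly_Mapping.keys g \<noteq> {}" using nz by auto
  have "Max (enc ` Poly_Mapping.keys f) \<in> enc ` Poly_Mapping.keys f" using kf by (intro Max_in) auto
  then obtain a0 where a0: "a0 \<in> Poly_Mapping.keys f" "enc a0 = Max (enc ` Poly_Mapping.keys f)"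
    by auto
  have "Max (enc ` Poly_Mapping.keys g) \<in> enc ` Poly_Mapping.keys g" using kg by (intro Max_in) auto
  then obtain b0 where b0: "b0 \<in> Poly_Mapping.keys g" "enc b0 = Max (enc ` Poly_Mapping.keys g)"
    by auto
  have ea: "enc a \<le> enc a0" if "a \<in> Poly_Mapping.keys f" for a
    using a0 kf that by simp
  have eb: "enc b \<le> enc b0" if "b \<in> Poly_Mapping.keys g" for b
    using b0 kg that by simp
  have iff: "(a + b = a0 + b0) \<longleftrightarrow> (a = a0 \<and> b = b0)"
    if "a \<in> Poly_Mapping.keys f" "b \<in> Poly_Mapping.keys g" for a b
  proof
    assume h: "a + b = a0 + b0"
    have le1: "enc a \<le> enc a0" and le2: "enc b \<le> enc b0" using ea eb that by auto
    have s: "enc a + enc b = enc a0 + enc b0" using h add by metis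
    have "enc a = enc a0"
    proof (rule ccontr)
      assume "enc a \<noteq> enc a0"
      then have "enc a < enc a0" using le1 by simp
      then have "enc a + enc b < enc a0 + enc b0" using le2 by (rule add_less_le_mono)
      then show False using s by simp
    qed
    moreover have "enc b = enc b0" using s calculation by simp
    ultimately show "a = a0 \<and> b = b0" using inj by (simp add: inj_eq)
  qed simp
  have "Poly_Mapping.lookup (f * g) (a0 + b0) =
    (\<Sum>a\<in>Poly_Mapping.keys f. \<Sum>b\<in>Poly_Mapping.keys g.
        if a = a0 \<and> b = b0 then Poly_Mapping.lookup f a * Poly_Mapping.lookup g b else 0)"
    unfolding lookup_mult_fin by (intro sum.cong refl) (simp add: iff)
  also have "\<dots> = Poly_Mapping.lookup f a0 * Poly_Mapping.lookup g b0"
  proof -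
    have "\<And>a. (\<Sum>b\<in>Poly_Mapping.keys g. if a = a0 \<and> b = b0 then Poly_Mapping.lookup f a * Poly_Mapping.lookup g b else 0)
       = (if a = a0 then Poly_Mapping.lookup f a0 * Poly_Mapping.lookup g b0 else 0)"
      using b0 kg by (simp add: sum.delta)
    then show ?thesis using a0 kf by (simp add: sum.delta)
  qed
  also have "\<dots> \<noteq> 0" using a0 b0 by (simp add: in_keys_iff)
  finally show ?thesis by auto
qed


lemma mpoly_nzd:
  fixes f g :: "('v::finite, 'k::field) mpoly"
  assumes "f \<noteq> 0" "g \<noteq> 0"
  shows "f * g \<noteq> 0"
proof -
  obtain xs :: "'v list" where xs: "distinct xs" "set xs = UNIV"
    using finite_distinct_list[OF finite_UNIV] by blast
  define enc :: "('v \<Rightarrow>\<^sub>0 nat) \<Rightarrow> (nat \<Rightarrow>\<^sub>0 nat)" where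
    "enc m = Abs_poly_mapping (\<lambda>i. if i < length xs then Poly_Mapping.lookup m (xs ! i) else 0)" for m
  have fin: "finite {i. (if i < length xs then Poly_Mapping.lookup m (xs ! i) else 0) \<noteq> 0}" for m :: "'v \<Rightarrow>\<^sub>0 nat"
    by (rule finite_subset[of _ "{..<length xs}"]) auto
  have lk: "Poly_Mapping.lookup (enc m) i = (if i < length xs then Poly_Mapping.lookup m (xs ! i) else 0)" for m i
    unfolding enc_def using fin[of m] by simp
  have add: "enc (a + b) = enc a + enc b" for a b
    by (rule poly_mapping_eqI) (simp add: lk lookup_add)
  have inj: "inj enc"
  proof (rule injI)
    fix a b assume h: "enc a = enc b"
    show "a = b"
    proof (rule poly_mapping_eqI)
      fix v
      have "v \<in> set xs" using xs(2) by simp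
      then obtain i where "i < length xs" "xs ! i = v" by (auto simp: in_set_conv_nth)
      then show "Poly_Mapping.lookup a v = Poly_Mapping.lookup b v"
        using arg_cong[OF h, of "\<lambda>p. Poly_Mapping.lookup p i"] by (simp add: lk)
    qed
  qed
  show ?thesis
    apply (rule nzd_gen[of enc])
    using inj add assms by auto
qed

lemma is_idealD:
  assumes "is_ideal I"
  shows "0 \<in> I" "a \<in> I \<Longrightarrow> b \<in> I \<Longrightarrow> a + b \<in> I" "a \<in> I \<Longrightarrow> r * a \<in> I"
  using assms unfolding is_ideal_def by auto

lemma ideal_neg: "is_ideal I \<Longrightarrow> a \<in> I \<Longrightarrow> - a \<in> I"
  using is_idealD(3)[of I a "-1"] by simp

lemma ideal_diff: "is_ideal I \<Longrightarrow> a \<in> I \<Longrightarrow> b \<in> I \<Longrightarrow> a - b \<in> I"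
  using is_idealD(2)[of I a "-b"] ideal_neg[of I b] by simp

lemma ideal_mult_right: "is_ideal I \<Longrightarrow> a \<in> I \<Longrightarrow> a * r \<in> I"
  using is_idealD(3)[of I a r] by (simp add: mult.commute)

lemma ideal_sum: "is_ideal I \<Longrightarrow> (\<And>i. i \<in> A \<Longrightarrow> h i \<in> I) \<Longrightarrow> sum h A \<in> I"
proof (induction A rule: infinite_finite_induct)
  case (infinite A) then show ?case by (simp add: is_idealD)
next
  case empty then show ?case by (simp add: is_idealD)
next
  case (insert x F) then show ?case by (simp add: is_idealD)
qed

lemma ideal_UNIV: "is_ideal UNIV" by (simp add: is_ideal_def)

lemma ideal_gen_ideal: "is_ideal (ideal_gen A)"
  unfolding ideal_gen_def is_ideal_def by (simp add: Inter_iff)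

lemma ideal_gen_sub: "A \<subseteq> ideal_gen A"
  unfolding ideal_gen_def by auto

lemma ideal_gen_least: "is_ideal J \<Longrightarrow> A \<subseteq> J \<Longrightarrow> ideal_gen A \<subseteq> J"
  unfolding ideal_gen_def by auto

lemma ideal_pow_ideal: "is_ideal (ideal_pow I n)"
  by (cases n) (auto simp: ideal_UNIV ideal_prod_def ideal_gen_ideal)

lemma ideal_pow_mult: "a \<in> I \<Longrightarrow> b \<in> ideal_pow I n \<Longrightarrow> a * b \<in> ideal_pow I (Suc n)"
proof -
  assume "a \<in> I" "b \<in> ideal_pow I n"
  then have "\<exists>a' b'. a * b = a' * b' \<and> a' \<in> I \<and> b' \<in> ideal_pow I n" by auto
  then have "a * b \<in> {a * b |a b. a \<in> I \<and> b \<in> ideal_pow I n}" by (simp only: mem_Collect_eq)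
  then have "a * b \<in> ideal_gen {a * b |a b. a \<in> I \<and> b \<in> ideal_pow I n}" by (rule subsetD[OF ideal_gen_sub])
  then show ?thesis by (simp add: ideal_prod_def)
qed

lemma colon_ideal_sup: "is_ideal J \<Longrightarrow> J \<subseteq> colon J f"
  unfolding colon_def using ideal_mult_right by blast

lemma colon_zero: "is_ideal J \<Longrightarrow> colon J 0 = UNIV"
  unfolding colon_def by (auto simp: is_idealD)

lemma prime_mem_pow: "prime_ideal P \<Longrightarrow> a ^ Suc n \<in> P \<Longrightarrow> a \<in> P"
proof (induction n)
  case 0 then show ?case by simp
next
  case (Suc n)
  have e: "a ^ Suc (Suc n) = a * a ^ Suc n" by (rule power_Suc)
  have "a * a ^ Suc n \<in> P" using Suc.prems(2) unfolding e .
  then have "a \<in> P \<or> a ^ Suc n \<in> P" using Suc.prems(1) unfolding prime_ideal_def by blast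
  then show ?case
  proof
    assume "a ^ Suc n \<in> P" then show ?thesis by (rule Suc.IH[OF Suc.prems(1)])
  qed
qed

section \<open>Weighted sets\<close>

definition Wt :: "(('v \<Rightarrow>\<^sub>0 nat) \<Rightarrow> nat) \<Rightarrow> nat \<Rightarrow> ('v, 'k::field) mpoly set" where
  "Wt w d = {p. \<forall>m\<in>Poly_Mapping.keys p. d \<le> w m}"

definition additive :: "(('v \<Rightarrow>\<^sub>0 nat) \<Rightarrow> nat) \<Rightarrow> bool" where
  "additive w \<longleftrightarrow> (\<forall>a b. w (a + b) = w a + w b)"

lemma Wt_mult:
  assumes "additive w" "a \<in> Wt w d1" "b \<in> Wt w d2"
  shows "a * b \<in> Wt w (d1 + d2)"
proof -
  have "d1 + d2 \<le> w m" if mk: "m \<in> Poly_Mapping.keys (a * b)" for m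
  proof -
    obtain x y where "m = x + y" "x \<in> Poly_Mapping.keys a" "y \<in> Poly_Mapping.keys b"
      using keys_mult[of a b] mk by blast
    then show ?thesis using assms unfolding Wt_def additive_def by fastforce
  qed
  then show ?thesis unfolding Wt_def by blast
qed

lemma Wt_ideal:
  assumes "additive w"
  shows "is_ideal (Wt w d :: ('v, 'k::field) mpoly set)"
proof -
  have "0 \<in> Wt w d" by (simp add: Wt_def)
  moreover have "a + b \<in> Wt w d" if "a \<in> Wt w d" "b \<in> Wt w d" for a b :: "('v, 'k) mpoly"
    using that keys_add[of a b] unfolding Wt_def by blast
  moreover have "r * a \<in> Wt w d" if "a \<in> Wt w d" for r a :: "('v, 'k) mpoly"
  proof -
    have "r \<in> Wt w 0" by (simp add: Wt_def)
    from Wt_mult[OF assms this that] show ?thesis by simp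
  qed
  ultimately show ?thesis unfolding is_ideal_def by blast
qed

lemma Wt_zero: "Wt w 0 = UNIV" by (simp add: Wt_def)

lemma ideal_pow_Wt:
  assumes "additive w" "I \<subseteq> Wt w c"
  shows "ideal_pow I n \<subseteq> Wt w (c * n)"
proof (induction n)
  case 0 then show ?case by (simp add: Wt_zero)
next
  case (Suc n)
  have "ideal_pow I (Suc n) = ideal_gen {a * b |a b. a \<in> I \<and> b \<in> ideal_pow I n}"
    by (simp add: ideal_prod_def)
  also have "\<dots> \<subseteq> Wt w (c + c * n)"
  proof (rule ideal_gen_least[OF Wt_ideal[OF assms(1)]])
    show "{a * b |a b. a \<in> I \<and> b \<in> ideal_pow I n} \<subseteq> Wt w (c + c * n)"
    proof
      fix x assume "x \<in> {a * b |a b. a \<in> I \<and> b \<in> ideal_pow I n}"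
      then obtain a b where "x = a * b" "a \<in> I" "b \<in> ideal_pow I n" by blast
      then show "x \<in> Wt w (c + c * n)" using Suc assms Wt_mult[OF assms(1), of a c b "c * n"] by blast
    qed
  qed
  finally show ?case by simp
qed

lemma var_prod_keys: "Poly_Mapping.keys (var_prod i j :: ('v, 'k::field) mpoly) =
   {Poly_Mapping.single i 1 + Poly_Mapping.single j 1}"
  by (simp add: var_prod_def)


lemma edge_ideal_Wt:
  assumes "additive w" "\<And>i j. E i j \<Longrightarrow> c \<le> w (Poly_Mapping.single i 1 + Poly_Mapping.single j 1)"
  shows "(edge_ideal E :: ('v::finite, 'k::field) mpoly set) \<subseteq> Wt w c"
  unfolding edge_ideal_def
proof (rule ideal_gen_least[OF Wt_ideal[OF assms(1)]])
  show "{var_prod i j |i j. E i j} \<subseteq> (Wt w c :: ('v, 'k) mpoly set)"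
  proof
    fix x :: "('v, 'k) mpoly" assume "x \<in> {var_prod i j |i j. E i j}"
    then obtain i j where "x = var_prod i j" "E i j" by blast
    then show "x \<in> Wt w c" using assms(2)[of i j] by (simp add: Wt_def var_prod_keys)
  qed
qed

definition wC :: "'v set \<Rightarrow> ('v \<Rightarrow>\<^sub>0 nat) \<Rightarrow> nat" where
  "wC C m = (\<Sum>c\<in>C. Poly_Mapping.lookup m c)"

lemma wC_add: "additive (wC C)"
  by (simp add: additive_def wC_def lookup_add sum.distrib)

lemma mdeg_add: "additive (mdeg :: ('v::finite \<Rightarrow>\<^sub>0 nat) \<Rightarrow> nat)"
  by (simp add: additive_def mdeg_def lookup_add sum.distrib)

lemma mdeg_single: "mdeg (Poly_Mapping.single (i::'v::finite) 1) = 1"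
  unfolding mdeg_def lookup_single when_def by (simp add: sum.delta)

lemma wC_single: "finite C \<Longrightarrow> wC C (Poly_Mapping.single i 1) = (if i \<in> C then 1 else 0)"
  unfolding wC_def lookup_single when_def by (simp add: sum.delta)


definition X :: "'v \<Rightarrow> ('v, 'k::field) mpoly" where
  "X c = Poly_Mapping.single (Poly_Mapping.single c 1) 1"

lemma var_prod_X: "(var_prod i j :: ('v, 'k::field) mpoly) = X i * X j"
  by (simp add: var_prod_def X_def mult_single)

lemma additive_zero: "additive w \<Longrightarrow> w 0 = 0"
  unfolding additive_def by (metis add.right_neutral add_cancel_right_right)

lemma additive_sum: "additive w \<Longrightarrow> w (\<Sum>a\<in>A. g a) = (\<Sum>a\<in>A. w (g a))"
proof (induction A rule: infinite_finite_induct)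
  case (infinite A) then show ?case by (simp add: additive_zero)
next
  case empty then show ?case by (simp add: additive_zero)
next
  case (insert x F) then show ?case by (simp add: additive_def)
qed

lemma mult_shift_key:
  fixes f :: "('v, 'k::field) mpoly"
  assumes "m \<in> Poly_Mapping.keys f"
  shows "s + m \<in> Poly_Mapping.keys (Poly_Mapping.single s 1 * f)"
  using assms by (simp add: in_keys_iff lookup_single_mult_shift)

lemma key_colon:
  fixes J :: "('v::finite, 'k::field) mpoly set" and C :: "'v set"
  assumes J: "is_ideal J"
    and sub: "J \<subseteq> Wt (wC C) (wC C mf + 1)"
    and gen: "\<And>c. c \<in> C \<Longrightarrow> X c * Poly_Mapping.single mf 1 \<in> J"
  shows "colon J (Poly_Mapping.single mf 1) = Wt (wC C) 1"
proof
  show "colon J (Poly_Mapping.single mf 1) \<subseteq> Wt (wC C) 1"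
  proof
    fix g assume "g \<in> colon J (Poly_Mapping.single mf 1)"
    then have gJ: "g * Poly_Mapping.single mf 1 \<in> J" by (simp add: colon_def)
    show "g \<in> Wt (wC C) 1" unfolding Wt_def
    proof (rule CollectI, rule ballI, rule ccontr)
      fix m assume mk: "m \<in> Poly_Mapping.keys g" and "\<not> 1 \<le> wC C m"
      then have w0: "wC C m = 0" by simp
      have "mf + m \<in> Poly_Mapping.keys (g * Poly_Mapping.single mf 1)"
        using mult_shift_key[OF mk, of mf] by (simp add: mult.commute)
      then have "wC C mf + 1 \<le> wC C (mf + m)" using gJ sub unfolding Wt_def by blast
      also have "\<dots> = wC C mf" using w0 wC_add[of C] unfolding additive_def by simp
      finally show False by simp
    qed
  qed
next
  show "Wt (wC C) 1 \<subseteq> colon J (Poly_Mapping.single mf 1)"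
  proof
    fix g :: "('v, 'k) mpoly" assume gW: "g \<in> Wt (wC C) 1"
    have trm: "Poly_Mapping.single m (Poly_Mapping.lookup g m) * Poly_Mapping.single mf 1 \<in> J"
      if mk: "m \<in> Poly_Mapping.keys g" for m
    proof -
      have "1 \<le> wC C m" using gW mk unfolding Wt_def by blast
      then have "(\<Sum>c\<in>C. Poly_Mapping.lookup m c) \<noteq> 0" unfolding wC_def by arith
      then obtain c where c: "c \<in> C" "Poly_Mapping.lookup m c \<noteq> 0"
        by (meson sum.not_neutral_contains_not_neutral)
      define m' where "m' = m - Poly_Mapping.single c 1"
      have mm: "m = m' + Poly_Mapping.single c 1"
      proof (rule poly_mapping_eqI)
        fix v show "Poly_Mapping.lookup m v = Poly_Mapping.lookup (m' + Poly_Mapping.single c 1) v"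
          using c(2) by (auto simp: m'_def lookup_add lookup_minus lookup_single when_def)
      qed
      have "Poly_Mapping.single m (Poly_Mapping.lookup g m) =
            Poly_Mapping.single m' (Poly_Mapping.lookup g m) * X c"
        by (simp add: X_def mult_single mm)
      then have "Poly_Mapping.single m (Poly_Mapping.lookup g m) * Poly_Mapping.single mf 1 =
           Poly_Mapping.single m' (Poly_Mapping.lookup g m) * (X c * Poly_Mapping.single mf 1)"
        by (simp add: mult.assoc)
      also have "\<dots> \<in> J" by (rule is_idealD(3)[OF J gen[OF c(1)]])
      finally show ?thesis .
    qed
    have "g * Poly_Mapping.single mf 1 =
      (\<Sum>m\<in>Poly_Mapping.keys g. Poly_Mapping.single m (Poly_Mapping.lookup g m) * Poly_Mapping.single mf 1)"
      by (subst poly_decomp[of g]) (simp add: sum_distrib_right)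
    also have "\<dots> \<in> J" by (rule ideal_sum[OF J trm])
    finally show "g \<in> colon J (Poly_Mapping.single mf 1)" by (simp add: colon_def)
  qed
qed


lemma Wt_prime:
  "prime_ideal (Wt (wC C) 1 :: ('v::finite, 'k::field) mpoly set)"
proof -
  let ?W = "Wt (wC C) 1 :: ('v, 'k) mpoly set"
  have id: "is_ideal ?W" by (rule Wt_ideal[OF wC_add])
  have one: "(1 :: ('v, 'k) mpoly) \<notin> ?W"
    by (simp add: Wt_def additive_zero[OF wC_add])
  define proj :: "('v, 'k) mpoly \<Rightarrow> ('v, 'k) mpoly" where
    "proj p = Abs_poly_mapping (\<lambda>m. if wC C m = 0 then Poly_Mapping.lookup p m else 0)" for p
  have lp: "Poly_Mapping.lookup (proj p) m = (if wC C m = 0 then Poly_Mapping.lookup p m else 0)" for p m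
  proof -
    have "finite {m. (if wC C m = 0 then Poly_Mapping.lookup p m else 0) \<noteq> 0}"
      by (rule finite_subset[of _ "{m. Poly_Mapping.lookup p m \<noteq> 0}"]) auto
    then show ?thesis unfolding proj_def by simp
  qed
  have rest: "p - proj p \<in> ?W" for p
    unfolding Wt_def by (auto simp: in_keys_iff lookup_minus lp split: if_splits)
  have projk: "m \<in> Poly_Mapping.keys (proj p) \<Longrightarrow> wC C m = 0" for p m
    by (auto simp: in_keys_iff lp split: if_splits)
  have projnz: "proj p \<noteq> 0" if np: "p \<notin> ?W" for p
  proof -
    obtain m where "m \<in> Poly_Mapping.keys p" "\<not> 1 \<le> wC C m" using np unfolding Wt_def by blast
    then have "Poly_Mapping.lookup (proj p) m \<noteq> 0" by (simp add: lp in_keys_iff)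
    then show ?thesis by auto
  qed
  have prime: "a \<in> ?W \<or> b \<in> ?W" if ab: "a * b \<in> ?W" for a b
  proof (rule ccontr)
    assume "\<not> (a \<in> ?W \<or> b \<in> ?W)"
    then have na: "a \<notin> ?W" and nb: "b \<notin> ?W" by auto
    define a1 where "a1 = a - proj a"
    define b1 where "b1 = b - proj b"
    have a1: "a1 \<in> ?W" and b1: "b1 \<in> ?W" unfolding a1_def b1_def by (rule rest)+
    have ea: "a = proj a + a1" and eb: "b = proj b + b1" by (simp_all add: a1_def b1_def)
    have "a * b = proj a * proj b + (proj a * b1 + a1 * proj b + a1 * b1)"
      by (subst ea, subst eb) (simp add: algebra_simps)
    moreover have r: "proj a * b1 + a1 * proj b + a1 * b1 \<in> ?W"
      using a1 b1 id by (intro is_idealD(2)[OF id] is_idealD(3)[OF id] ideal_mult_right[OF id])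
    ultimately have "proj a * proj b = a * b - (proj a * b1 + a1 * proj b + a1 * b1)" by simp
    also have "\<dots> \<in> ?W" by (rule ideal_diff[OF id ab r])
    finally have inW: "proj a * proj b \<in> ?W" .
    have "proj a * proj b \<noteq> 0" by (rule mpoly_nzd[OF projnz[OF na] projnz[OF nb]])
    then have "Poly_Mapping.keys (proj a * proj b) \<noteq> {}" by simp
    then obtain m where mk: "m \<in> Poly_Mapping.keys (proj a * proj b)" by blast
    then obtain x y where "m = x + y" "x \<in> Poly_Mapping.keys (proj a)" "y \<in> Poly_Mapping.keys (proj b)"
      using keys_mult[of "proj a" "proj b"] by blast
    then have "wC C m = 0" using projk wC_add[of C] unfolding additive_def by simp
    moreover have "1 \<le> wC C m" using inW mk unfolding Wt_def by blast
    ultimately show False by simp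
  qed
  show ?thesis unfolding prime_ideal_def using id one prime by blast
qed

lemma key_Ass:
  fixes J :: "('v::finite, 'k::field) mpoly set" and C :: "'v set"
  assumes J: "is_ideal J"
    and sub: "J \<subseteq> Wt (wC C) (wC C mf + 1)"
    and gen: "\<And>c. c \<in> C \<Longrightarrow> X c * Poly_Mapping.single mf 1 \<in> J"
  shows "homogeneous (mdeg mf) (Poly_Mapping.single mf (1::'k))"
    "Wt (wC C) 1 \<in> Ass J" "colon J (Poly_Mapping.single mf 1) = Wt (wC C) 1"
proof -
  show "homogeneous (mdeg mf) (Poly_Mapping.single mf (1::'k))" by (simp add: homogeneous_def)
  show c: "colon J (Poly_Mapping.single mf 1) = Wt (wC C) 1" by (rule key_colon[OF J sub gen])
  show "Wt (wC C) 1 \<in> Ass J" unfolding Ass_def using Wt_prime c by blast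
qed

definition Dv :: "('v \<Rightarrow> 'v \<Rightarrow> bool) \<Rightarrow> ('v, 'k::field) mpoly set" where
  "Dv E = {p. \<forall>m\<in>Poly_Mapping.keys p. \<exists>i j. E i j \<and>
      (\<forall>v. Poly_Mapping.lookup (Poly_Mapping.single i 1 + Poly_Mapping.single j 1) v \<le> Poly_Mapping.lookup m v)}"

lemma Dv_ideal: "is_ideal (Dv E)"
proof -
  have "0 \<in> Dv E" by (simp add: Dv_def)
  moreover have "a + b \<in> Dv E" if "a \<in> Dv E" "b \<in> Dv E" for a b
    using that keys_add[of a b] unfolding Dv_def by blast
  moreover have "r * a \<in> Dv E" if aD: "a \<in> Dv E" for r a
  proof -
    have "\<exists>i j. E i j \<and> (\<forall>v. Poly_Mapping.lookup (Poly_Mapping.single i 1 + Poly_Mapping.single j 1) v \<le> Poly_Mapping.lookup m v)"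
      if mk: "m \<in> Poly_Mapping.keys (r * a)" for m
    proof -
      obtain x y where xy: "m = x + y" "y \<in> Poly_Mapping.keys a"
        using keys_mult[of r a] mk by blast
      then obtain i j where "E i j" and le: "\<forall>v. Poly_Mapping.lookup (Poly_Mapping.single i 1 + Poly_Mapping.single j 1) v \<le> Poly_Mapping.lookup y v"
        using aD unfolding Dv_def by blast
      moreover have "\<forall>v. Poly_Mapping.lookup y v \<le> Poly_Mapping.lookup m v" using xy by (simp add: lookup_add)
      ultimately show ?thesis using le_trans by blast
    qed
    then show ?thesis unfolding Dv_def by blast
  qed
  ultimately show ?thesis unfolding is_ideal_def by blast
qed

lemma edge_ideal_Dv: "(edge_ideal E :: ('v::finite, 'k::field) mpoly set) \<subseteq> Dv E"
  unfolding edge_ideal_def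
proof (rule ideal_gen_least[OF Dv_ideal])
  show "{var_prod i j |i j. E i j} \<subseteq> (Dv E :: ('v, 'k) mpoly set)"
  proof
    fix x :: "('v, 'k) mpoly" assume "x \<in> {var_prod i j |i j. E i j}"
    then obtain i j where "x = var_prod i j" "E i j" by blast
    then show "x \<in> Dv E" by (auto simp: Dv_def var_prod_keys)
  qed
qed

lemma edge_from_dom:
  assumes sg: "simple_graph E" and e: "E i j"
    and le: "\<forall>v. Poly_Mapping.lookup (Poly_Mapping.single i 1 + Poly_Mapping.single j (1::nat)) v
            \<le> Poly_Mapping.lookup (Poly_Mapping.single a 1 + Poly_Mapping.single x 1) v"
  shows "E a x"
proof -
  have ij: "i \<noteq> j" using sg e unfolding simple_graph_def by blast
  have li: "(1::nat) \<le> (1 when a = i) + ((1::nat) when x = i)"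
    using le[rule_format, of i] ij by (simp add: lookup_add lookup_single when_def)
  have lj: "(1::nat) \<le> (1 when a = j) + ((1::nat) when x = j)"
    using le[rule_format, of j] ij by (simp add: lookup_add lookup_single when_def)
  have "(a = i \<and> x = j) \<or> (a = j \<and> x = i)"
    using li lj ij by (auto simp: when_def split: if_splits)
  then show ?thesis using e sg unfolding simple_graph_def by blast
qed

lemma pow_single: "(Poly_Mapping.single m (1::'k::field)) ^ n = Poly_Mapping.single (\<Sum>i<n. m) 1"
proof (induction n)
  case 0 then show ?case by simp
next
  case (Suc n)
  have "(Poly_Mapping.single m (1::'k)) ^ Suc n = Poly_Mapping.single m 1 * Poly_Mapping.single (\<Sum>i<n. m) 1"
    by (simp only: power_Suc Suc.IH)
  also have "\<dots> = Poly_Mapping.single (m + (\<Sum>i<n. m)) 1" by (simp add: mult_single)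
  also have "m + (\<Sum>i<n. m) = (\<Sum>i<Suc n. m)" by (simp only: sum.lessThan_Suc add.commute)
  finally show ?case .
qed

lemma var_prod_in: "E i j \<Longrightarrow> var_prod i j \<in> edge_ideal E"
proof -
  assume "E i j"
  then have "\<exists>i' j'. var_prod i j = var_prod i' j' \<and> E i' j'" by auto
  then have "var_prod i j \<in> {var_prod i j |i j. E i j}" by (simp only: mem_Collect_eq)
  then show ?thesis unfolding edge_ideal_def by (rule subsetD[OF ideal_gen_sub])
qed

lemma pow_in_ideal_pow: "a \<in> I \<Longrightarrow> a ^ n \<in> ideal_pow I n"
proof (induction n)
  case 0 then show ?case by simp
next
  case (Suc n)
  then have "a * a ^ n \<in> ideal_pow I (Suc n)" by (intro ideal_pow_mult)
  then show ?case by (simp only: power_Suc)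
qed


lemma mdeg_one:
  assumes "mdeg (m :: 'v::finite \<Rightarrow>\<^sub>0 nat) = 1"
  shows "\<exists>x. m = Poly_Mapping.single x 1"
proof -
  have s: "(\<Sum>v\<in>UNIV. Poly_Mapping.lookup m v) = 1" using assms by (simp add: mdeg_def)
  then obtain x where x: "Poly_Mapping.lookup m x \<noteq> 0"
    by (metis one_neq_zero sum.neutral)
  have "(\<Sum>v\<in>UNIV. Poly_Mapping.lookup m v) = Poly_Mapping.lookup m x + (\<Sum>v\<in>UNIV - {x}. Poly_Mapping.lookup m v)"
    by (rule sum.remove) auto
  then have a: "Poly_Mapping.lookup m x = 1" and b: "(\<Sum>v\<in>UNIV - {x}. Poly_Mapping.lookup m v) = 0"
    using s x by arith+
  have c: "Poly_Mapping.lookup m v = 0" if "v \<noteq> x" for v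
    using b that by simp
  show ?thesis
  proof (intro exI poly_mapping_eqI)
    fix v show "Poly_Mapping.lookup m v = Poly_Mapping.lookup (Poly_Mapping.single x 1) v"
      using a c by (cases "v = x") (simp_all add: lookup_single when_def)
  qed
qed

lemma wC_single_S: "finite C \<Longrightarrow> wC C (Poly_Mapping.single i (Suc 0)) = (if i \<in> C then 1 else 0)"
  using wC_single[of C i] by simp

lemma mdeg_single_S: "mdeg (Poly_Mapping.single (i::'v::finite) (Suc 0)) = 1"
  using mdeg_single[of i] by simp

lemma edge_ideal_ideal: "is_ideal (edge_ideal E)"
  unfolding edge_ideal_def by (rule ideal_gen_ideal)

lemma exists_witness:
  fixes E :: "'v::finite \<Rightarrow> 'v \<Rightarrow> bool"
  assumes sg: "simple_graph E"
  shows "\<exists>k f P. homogeneous k f \<and> P \<in> Ass (edge_ideal E :: ('v, 'k::field) mpoly set) \<and>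
              colon (edge_ideal E) f = P"
proof -
  define indep where "indep A \<longleftrightarrow> (\<forall>a\<in>A. \<forall>b\<in>A. \<not> E a b)" for A
  have i0: "indep {}" by (simp add: indep_def)
  have bnd: "\<forall>A. indep A \<longrightarrow> card A < card (UNIV :: 'v set) + 1"
  proof (intro allI impI)
    fix B :: "'v set"
    have "card B \<le> card (UNIV :: 'v set)" by (rule card_mono) auto
    then show "card B < card (UNIV :: 'v set) + 1" by simp
  qed
  obtain A where A: "indep A" "\<forall>B. indep B \<longrightarrow> card B \<le> card A"
    using ex_has_greatest_nat[of indep "{}" card "card (UNIV :: 'v set) + 1", OF i0 bnd] by blast
  have nb: "\<exists>a\<in>A. E c a" if cA: "c \<notin> A" for c
  proof (rule ccontr)
    assume h: "\<not> (\<exists>a\<in>A. E c a)"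
    have "indep (insert c A)"
      using A(1) h sg unfolding indep_def simple_graph_def by blast
    then have "card (insert c A) \<le> card A" using A(2) by blast
    moreover have "card (insert c A) = Suc (card A)" using cA by simp
    ultimately show False by simp
  qed
  define C where "C = - A"
  define mf where "mf = (\<Sum>a\<in>A. Poly_Mapping.single a (1::nat))"
  have fC: "finite C" by (rule finite_subset[OF subset_UNIV finite_UNIV])
  have wmf: "wC C mf = 0"
  proof -
    have "wC C (Poly_Mapping.single a 1) = 0" if aA: "a \<in> A" for a
    proof -
      have "wC C (Poly_Mapping.single a 1) = (if a \<in> C then 1 else 0)" by (rule wC_single[OF fC])
      also have "\<dots> = 0" using aA by (simp add: C_def)
      finally show ?thesis .
    qed
    then show ?thesis unfolding mf_def additive_sum[OF wC_add] by simp
  qed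
  have sub: "(edge_ideal E :: ('v, 'k) mpoly set) \<subseteq> Wt (wC C) (wC C mf + 1)"
    unfolding wmf
  proof (rule edge_ideal_Wt[OF wC_add])
    fix i j assume e: "E i j"
    then have "i \<in> C \<or> j \<in> C" using A(1) unfolding indep_def C_def by blast
    then show "0 + 1 \<le> wC C (Poly_Mapping.single i 1 + Poly_Mapping.single j 1)"
      using wC_add[of C] fC unfolding additive_def by (auto simp: wC_single_S)
  qed
  have gen: "X c * Poly_Mapping.single mf 1 \<in> (edge_ideal E :: ('v, 'k) mpoly set)" if cC: "c \<in> C" for c
  proof -
    obtain a where a: "a \<in> A" "E c a" using nb cC unfolding C_def by blast
    define r where "r = (\<Sum>b\<in>A - {a}. Poly_Mapping.single b (1::nat))"
    have "mf = Poly_Mapping.single a 1 + r" unfolding mf_def r_def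
      by (rule sum.remove) (simp_all add: a)
    then have "Poly_Mapping.single mf (1::'k) = X a * Poly_Mapping.single r 1"
      by (simp add: X_def mult_single)
    then have "X c * Poly_Mapping.single mf (1::'k) = var_prod c a * Poly_Mapping.single r 1"
      by (simp add: var_prod_X mult.assoc)
    also have "\<dots> \<in> edge_ideal E"
      by (rule ideal_mult_right[OF edge_ideal_ideal var_prod_in[of E c a, OF a(2)]])
    finally show ?thesis .
  qed
  from key_Ass[OF edge_ideal_ideal sub gen] show ?thesis by blast
qed


lemma mdeg_plus: "mdeg ((a::'v::finite \<Rightarrow>\<^sub>0 nat) + b) = mdeg a + mdeg b"
  using mdeg_add unfolding additive_def by blast

theorem corollary4p16:
  fixes E :: "'v::finite \<Rightarrow> 'v \<Rightarrow> bool"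
  assumes "simple_graph E"
    and "v_number (edge_ideal E :: ('v, 'k::field) mpoly set) = 1"
  shows "\<forall>n\<ge>1. v_number (ideal_pow (edge_ideal E :: ('v, 'k) mpoly set) (n + 1)) = 2 * n + 1"
proof (intro allI impI)
  fix n :: nat assume n1: "n \<ge> 1"
  note sg = assms(1)
  let ?I = "edge_ideal E :: ('v, 'k) mpoly set"
  have Iid: "is_ideal ?I" by (rule edge_ideal_ideal)
  have fU: "finite (S :: 'v set)" for S by (rule finite_subset[OF subset_UNIV finite_UNIV])
  have irr: "\<not> E z z" for z using sg unfolding simple_graph_def by blast
  have sym: "E a b \<Longrightarrow> E b a" for a b using sg unfolding simple_graph_def by blast
  have ex_edge: "\<exists>i j. E i j"
  proof (rule ccontr)
    assume ne: "\<not> (\<exists>i j. E i j)"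
    have sub0: "?I \<subseteq> Wt (wC {}) (wC {} 0 + 1)"
      by (rule edge_ideal_Wt[OF wC_add]) (use ne in blast)
    have gen0: "X c * Poly_Mapping.single 0 1 \<in> ?I" if "c \<in> {}" for c
      using that by blast
    note K = key_Ass[OF Iid sub0 gen0]
    have "mdeg (0 :: 'v \<Rightarrow>\<^sub>0 nat) = 0" by (rule additive_zero[OF mdeg_add])
    then have "\<exists>f P. homogeneous 0 f \<and> P \<in> Ass ?I \<and> colon ?I f = P" using K by metis
    then have "v_number ?I \<le> 0" unfolding v_number_def by (rule Least_le)
    then show False using assms(2) by simp
  qed
  have "\<exists>f P. homogeneous 1 f \<and> P \<in> Ass ?I \<and> colon ?I f = P"
  proof -
    have "\<exists>k f P. homogeneous k f \<and> P \<in> Ass ?I \<and> colon ?I f = P" by (rule exists_witness[OF sg])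
    then have "\<exists>f P. homogeneous (v_number ?I) f \<and> P \<in> Ass ?I \<and> colon ?I f = P"
      unfolding v_number_def by (rule LeastI_ex)
    then show ?thesis using assms(2) by simp
  qed
  then obtain f1 P1 where hom1: "homogeneous 1 f1" and P1A: "P1 \<in> Ass ?I" and c1: "colon ?I f1 = P1"
    by blast
  have P1p: "prime_ideal P1" using P1A by (simp add: Ass_def)
  have f1nz: "f1 \<noteq> 0"
  proof
    assume "f1 = 0"
    then have "P1 = UNIV" using c1 colon_zero[OF Iid] by simp
    then show False using P1p by (simp add: prime_ideal_def)
  qed
  then have "Poly_Mapping.keys f1 \<noteq> {}" by simp
  then obtain m0 where m0: "m0 \<in> Poly_Mapping.keys f1" by blast
  then have "mdeg m0 = 1" using hom1 by (simp add: homogeneous_def)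
  then obtain x where x: "m0 = Poly_Mapping.single x 1" using mdeg_one by blast
  have IP1: "?I \<subseteq> P1" using colon_ideal_sup[OF Iid, of f1] c1 by simp
  have adjz: "E x z" if zP: "X z \<in> P1" for z
  proof -
    have "X z * f1 \<in> ?I" using zP c1 by (auto simp: colon_def)
    then have D: "X z * f1 \<in> Dv E" using edge_ideal_Dv by blast
    have "Poly_Mapping.single z 1 + m0 \<in> Poly_Mapping.keys (X z * f1)"
      unfolding X_def by (rule mult_shift_key[OF m0])
    then have key: "Poly_Mapping.single z 1 + Poly_Mapping.single x 1 \<in> Poly_Mapping.keys (X z * f1)"
      unfolding x .
    have "\<forall>m\<in>Poly_Mapping.keys (X z * f1). \<exists>i j. E i j \<and>
      (\<forall>v. Poly_Mapping.lookup (Poly_Mapping.single i 1 + Poly_Mapping.single j 1) v \<le> Poly_Mapping.lookup m v)"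
      using D unfolding Dv_def by (simp only: mem_Collect_eq)
    from bspec[OF this key] obtain i j :: 'v where "E i j" and
      le: "\<forall>v. Poly_Mapping.lookup (Poly_Mapping.single i 1 + Poly_Mapping.single j 1) v
              \<le> Poly_Mapping.lookup (Poly_Mapping.single z 1 + Poly_Mapping.single x (1::nat)) v"
      by blast
    have "E z x" by (rule edge_from_dom[OF sg \<open>E i j\<close> le])
    then show ?thesis by (rule sym)
  qed
  have adj: "E x a \<or> E x b" if e: "E a b" for a b
  proof -
    have "X a * X b \<in> P1" using var_prod_in[of E a b, OF e] IP1 by (auto simp: var_prod_X)
    then have "X a \<in> P1 \<or> X b \<in> P1" using P1p unfolding prime_ideal_def by blast
    then show ?thesis using adjz by blast
  qed
  obtain y where xy: "E x y" using ex_edge adj by blast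
  define N where "N = {c. E x c}"
  have fN: "finite N" by (rule fU)
  have xN: "x \<notin> N" using irr by (simp add: N_def)
  have yN: "y \<in> N" using xy by (simp add: N_def)
  let ?J = "ideal_pow ?I (n + 1)"
  have Jid: "is_ideal ?J" by (rule ideal_pow_ideal)
  define mf where "mf = (\<Sum>i<n. Poly_Mapping.single x 1 + Poly_Mapping.single y (1::nat)) + Poly_Mapping.single x 1"
  have wxy: "wC N (Poly_Mapping.single x 1 + Poly_Mapping.single y 1) = 1"
    using wC_add[of N] xN yN fN unfolding additive_def by (simp add: wC_single_S)
  have wmf: "wC N mf = n"
    using wC_add[of N] xN yN fN unfolding mf_def additive_def
    by (simp add: additive_sum[OF wC_add] wxy wC_single_S)
  have mxy: "mdeg (Poly_Mapping.single x 1 + Poly_Mapping.single y (1::nat)) = 2"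
    by (simp add: mdeg_plus mdeg_single_S)
  have dmf: "mdeg mf = 2 * n + 1"
    unfolding mf_def by (simp add: mdeg_plus additive_sum[OF mdeg_add] mxy mdeg_single_S)
  have Isub1: "?I \<subseteq> Wt (wC N) 1"
  proof (rule edge_ideal_Wt[OF wC_add])
    fix i j assume "E i j"
    then have "i \<in> N \<or> j \<in> N" using adj by (simp add: N_def)
    then show "1 \<le> wC N (Poly_Mapping.single i 1 + Poly_Mapping.single j 1)"
      using wC_add[of N] fN unfolding additive_def by (auto simp: wC_single_S)
  qed
  have Jsub: "?J \<subseteq> Wt (wC N) (wC N mf + 1)"
    using ideal_pow_Wt[OF wC_add Isub1, of "n + 1"] wmf by simp
  have fmf: "Poly_Mapping.single mf (1::'k) = var_prod x y ^ n * X x"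
    by (simp add: mf_def var_prod_def pow_single X_def mult_single)
  have gen: "X c * Poly_Mapping.single mf 1 \<in> ?J" if cN: "c \<in> N" for c
  proof -
    have exc: "E x c" using cN by (simp add: N_def)
    have "X c * Poly_Mapping.single mf (1::'k) = var_prod x c * var_prod x y ^ n"
      unfolding fmf var_prod_X by (simp add: ac_simps)
    also have "\<dots> \<in> ideal_pow ?I (Suc n)"
      by (rule ideal_pow_mult[OF var_prod_in[of E x c, OF exc] pow_in_ideal_pow[OF var_prod_in[of E x y, OF xy]]])
    finally show ?thesis by simp
  qed
  note K = key_Ass[OF Jid Jsub gen]
  have Jdeg: "?J \<subseteq> Wt mdeg (2 * (n + 1))"
  proof -
    have "?I \<subseteq> Wt mdeg 2"
    proof (rule edge_ideal_Wt[OF mdeg_add])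
      fix i j assume "E i j"
      show "2 \<le> mdeg (Poly_Mapping.single i 1 + Poly_Mapping.single j (1::nat))"
        by (simp add: mdeg_plus mdeg_single_S)
    qed
    then show ?thesis by (rule ideal_pow_Wt[OF mdeg_add])
  qed
  show "v_number ?J = 2 * n + 1"
    unfolding v_number_def
  proof (rule Least_equality)
    show "\<exists>f P. homogeneous (2 * n + 1) f \<and> P \<in> Ass ?J \<and> colon ?J f = P"
      using K dmf by metis
  next
    fix k assume "\<exists>f P. homogeneous k f \<and> P \<in> Ass ?J \<and> colon ?J f = P"
    then obtain f P where hk: "homogeneous k f" and PA: "P \<in> Ass ?J" and cP: "colon ?J f = P" by blast
    have Pp: "prime_ideal P" using PA by (simp add: Ass_def)
    have fnz: "f \<noteq> 0"
    proof
      assume "f = 0"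
      then have "P = UNIV" using cP colon_zero[OF Jid] by simp
      then show False using Pp by (simp add: prime_ideal_def)
    qed
    have JP: "?J \<subseteq> P" using colon_ideal_sup[OF Jid, of f] cP by simp
    have "var_prod x y ^ Suc n \<in> ?J"
      using pow_in_ideal_pow[OF var_prod_in[of E x y, OF xy], of "Suc n"] by simp
    then have "var_prod x y ^ Suc n \<in> P" using JP by blast
    then have "var_prod x y \<in> P" by (rule prime_mem_pow[OF Pp])
    then have "X x * X y \<in> P" by (simp add: var_prod_X)
    then have "X x \<in> P \<or> X y \<in> P" using Pp unfolding prime_ideal_def by blast
    then obtain z where zP: "X z \<in> P" by blast
    have zf: "X z * f \<in> ?J" using zP cP by (auto simp: colon_def)
    have "Poly_Mapping.keys f \<noteq> {}" using fnz by simp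
    then obtain m where m: "m \<in> Poly_Mapping.keys f" by blast
    have dm: "mdeg m = k" using hk m by (simp add: homogeneous_def)
    have "Poly_Mapping.single z 1 + m \<in> Poly_Mapping.keys (X z * f)"
      unfolding X_def by (rule mult_shift_key[OF m])
    then have "2 * (n + 1) \<le> mdeg (Poly_Mapping.single z 1 + m)" using zf Jdeg unfolding Wt_def by blast
    also have "\<dots> = 1 + k" using dm mdeg_single[of z] by (simp add: mdeg_plus)
    finally show "2 * n + 1 \<le> k" by simp
  qed
qed

end
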